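(* Assume $\Phi_0>0$, let $\gamma>1$ and $\tau>0$, and let $C$ be the set of $\tau$-cheap edges. If $F\subseteq E$ is an $r$-edge-cover with $\tau\ge\ell_F(B)$, then $\Phi(C\cap F)\le\Phi_0/\gamma$.
   Context: Bipartite Activation Edge-Multicover setting: a bipartite multigraph $G=(A\cup B,E)$, each edge $e=ab$ ($a\in A$, $b\in B$) with non-negative activation costs $c_e^a,c_e^b$, and non-negative integer requirements $r_b$ for $b\in B$. For $J\subseteq E$, $\delta_J(v)$ is the set of edges of $J$ at $v$, $\deg_J(v)=|\delta_J(v)|$, $\ell_J(v)=\max\{c_e^v:e\in\delta_J(v)\}$ ($0$ if empty), $\ell_J(U)=\sum_{v\in U}\ell_J(v)$; $J$ is an $r$-edge-cover if $\deg_J(b)\ge r_b$ for all $b\in B$. For $b\in B$, $w_b$ is the $r_b$-th smallest value $c_e^b$ over edges $e\in E$ incident to $b$ (with multiplicity), $w_b=0$ if $r_b=0$. $\Phi(J)=\sum_{b\in B}w_b\max\{r_b-\deg_J(b),0\}$ and $\Phi_0=\Phi(\emptyset)=\sum_{b\in B}w_br_b$. Given $\gamma$ and $\tau$, an edge $e$ incident to $b\in B$ is $\tau$-cheap if $c_e^b\le\gamma\tau\cdot\frac{w_br_b}{\Phi_0}$; $C=\bigcup_{b\in B}\{e\in\delta_E(b): c_e^b\le\gamma\tau\, w_br_b/\Phi_0\}$. *)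

theory Defs
  imports Complex_Main "HOL-Library.Multiset"
begin

(* Bipartite multigraph: edges are identifiers 'e in a finite set E, each edge e
   has endpoint endA e \<in> A and endB e \<in> B (parallel edges allowed).
   Costs: cA e = c_e^a, cB e = c_e^b. *)

definition delta :: "'e set \<Rightarrow> ('e \<Rightarrow> 'v) \<Rightarrow> 'v \<Rightarrow> 'e set" where
  "delta J endp v = {e \<in> J. endp e = v}"

definition deg :: "'e set \<Rightarrow> ('e \<Rightarrow> 'v) \<Rightarrow> 'v \<Rightarrow> nat" where
  "deg J endp v = card (delta J endp v)"

definition ell :: "'e set \<Rightarrow> ('e \<Rightarrow> 'v) \<Rightarrow> ('e \<Rightarrow> real) \<Rightarrow> 'v \<Rightarrow> real" where
  "ell J endp c v = (if delta J endp v = {} then 0 else Max (c ` delta J endp v))"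

definition ell_set :: "'e set \<Rightarrow> ('e \<Rightarrow> 'v) \<Rightarrow> ('e \<Rightarrow> real) \<Rightarrow> 'v set \<Rightarrow> real" where
  "ell_set J endp c U = (\<Sum>v\<in>U. ell J endp c v)"

definition is_edge_cover :: "'e set \<Rightarrow> ('e \<Rightarrow> 'b) \<Rightarrow> 'b set \<Rightarrow> ('b \<Rightarrow> nat) \<Rightarrow> bool" where
  "is_edge_cover J endB B r \<longleftrightarrow> (\<forall>b\<in>B. deg J endB b \<ge> r b)"

(* w_b: the r_b-th smallest value of c_e^b over edges of E incident to b
   (with multiplicity); 0 if r_b = 0 *)
definition wt :: "'e set \<Rightarrow> ('e \<Rightarrow> 'b) \<Rightarrow> ('e \<Rightarrow> real) \<Rightarrow> ('b \<Rightarrow> nat) \<Rightarrow> 'b \<Rightarrow> real" where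
  "wt E endB cB r b = (if r b = 0 then 0
     else sorted_list_of_multiset (image_mset cB (mset_set (delta E endB b))) ! (r b - 1))"

definition Phi :: "'e set \<Rightarrow> ('e \<Rightarrow> 'b) \<Rightarrow> ('e \<Rightarrow> real) \<Rightarrow> 'b set \<Rightarrow> ('b \<Rightarrow> nat) \<Rightarrow> 'e set \<Rightarrow> real" where
  "Phi E endB cB B r J = (\<Sum>b\<in>B. wt E endB cB r b * max (real (r b) - real (deg J endB b)) 0)"

definition Phi0 :: "'e set \<Rightarrow> ('e \<Rightarrow> 'b) \<Rightarrow> ('e \<Rightarrow> real) \<Rightarrow> 'b set \<Rightarrow> ('b \<Rightarrow> nat) \<Rightarrow> real" where
  "Phi0 E endB cB B r = Phi E endB cB B r {}"

definition cheap :: "'e set \<Rightarrow> ('e \<Rightarrow> 'b) \<Rightarrow> ('e \<Rightarrow> real) \<Rightarrow> 'b set \<Rightarrow> ('b \<Rightarrow> nat) \<Rightarrow> real \<Rightarrow> real \<Rightarrow> 'e set" where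
  "cheap E endB cB B r \<gamma> \<tau> = (\<Union>b\<in>B. {e \<in> delta E endB b.
      cB e \<le> \<gamma> * \<tau> * (wt E endB cB r b * real (r b)) / Phi0 E endB cB B r})"

end

theory Submission
  imports Defs
begin

theorem mainTheorem10:
  fixes A :: "'a set" and B :: "'b set" and E :: "'e set"
    and endA :: "'e \<Rightarrow> 'a" and endB :: "'e \<Rightarrow> 'b"
    and cA cB :: "'e \<Rightarrow> real" and r :: "'b \<Rightarrow> nat"
    and \<gamma> \<tau> :: real and F :: "'e set"
  assumes "finite A" and "finite B" and "finite E"
    and "\<forall>e\<in>E. endA e \<in> A \<and> endB e \<in> B"
    and "\<forall>e\<in>E. cA e \<ge> 0 \<and> cB e \<ge> 0"
    and "Phi0 E endB cB B r > 0"
    and "\<gamma> > 1" and "\<tau> > 0"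
    and "F \<subseteq> E" and "is_edge_cover F endB B r"
    and "\<tau> \<ge> ell_set F endB cB B"
  shows "Phi E endB cB B r (cheap E endB cB B r \<gamma> \<tau> \<inter> F) \<le> Phi0 E endB cB B r / \<gamma>"
proof -
  define P where "P = Phi0 E endB cB B r"
  define C where "C = cheap E endB cB B r \<gamma> \<tau>"
  define w where "w = wt E endB cB r"
  have P: "P > 0" using assms(6) P_def by simp
  have gt: "\<gamma> * \<tau> > 0" using assms(7,8) by simp
  have finF: "finite F" using assms(3,9) finite_subset by blast
  have ellnn: "ell F endB cB b \<ge> 0" for b
  proof (cases "delta F endB b = {}")
    case True then show ?thesis by (simp add: ell_def)
  next
    case False
    then obtain e where e: "e \<in> delta F endB b" by blast
    have fin: "finite (delta F endB b)" using finF by (simp add: delta_def)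
    have "cB e \<ge> 0" using e assms(5,9) by (auto simp: delta_def)
    also have "cB e \<le> Max (cB ` delta F endB b)" using fin e by simp
    finally show ?thesis using False by (simp add: ell_def)
  qed
  have key: "w b * max (real (r b) - real (deg (C \<inter> F) endB b)) 0
      \<le> P / (\<gamma> * \<tau>) * ell F endB cB b" if b: "b \<in> B" for b
  proof (cases "w b < 0 \<or> real (r b) - real (deg (C \<inter> F) endB b) \<le> 0")
    case True
    have "P / (\<gamma> * \<tau>) * ell F endB cB b \<ge> 0" using P gt ellnn by simp
    moreover have "w b * max (real (r b) - real (deg (C \<inter> F) endB b)) 0 \<le> 0"
      using True by (auto simp: mult_nonpos_nonneg max_def)
    ultimately show ?thesis by linarith
  next
    case False
    hence w0: "w b \<ge> 0" and lt: "deg (C \<inter> F) endB b < r b" by auto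
    have "r b \<le> deg F endB b" using assms(10) b by (simp add: is_edge_cover_def)
    hence "card (delta (C \<inter> F) endB b) < card (delta F endB b)"
      using lt by (simp add: deg_def)
    moreover have "finite (delta (C \<inter> F) endB b)" using finF by (simp add: delta_def)
    ultimately have "\<not> delta F endB b \<subseteq> delta (C \<inter> F) endB b"
      by (meson card_mono not_le)
    then obtain e where eF: "e \<in> F" and eb: "endB e = b" and eC: "e \<notin> C"
      by (auto simp: delta_def)
    have eE: "e \<in> delta E endB b" using eF eb assms(9) by (auto simp: delta_def)
    have nc: "cB e > \<gamma> * \<tau> * (w b * real (r b)) / P"
    proof (rule ccontr)
      assume "\<not> ?thesis"
      hence "e \<in> {e \<in> delta E endB b. cB e \<le> \<gamma> * \<tau> * (wt E endB cB r b * real (r b)) / Phi0 E endB cB B r}"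
        using eE unfolding w_def P_def by simp
      hence "e \<in> C" using b unfolding C_def cheap_def by blast
      with eC show False by simp
    qed
    have fin: "finite (delta F endB b)" using finF by (simp add: delta_def)
    have ein: "e \<in> delta F endB b" using eF eb by (simp add: delta_def)
    hence "cB e \<le> ell F endB cB b" using fin by (auto simp: ell_def)
    hence "\<gamma> * \<tau> * (w b * real (r b)) / P < ell F endB cB b" using nc by linarith
    hence "\<gamma> * \<tau> * (w b * real (r b)) < ell F endB cB b * P"
      using P by (simp add: divide_less_eq)
    hence wr: "w b * real (r b) < P / (\<gamma> * \<tau>) * ell F endB cB b"
      using gt by (simp add: field_simps)
    have "max (real (r b) - real (deg (C \<inter> F) endB b)) 0 \<le> real (r b)" by simp
    hence "w b * max (real (r b) - real (deg (C \<inter> F) endB b)) 0 \<le> w b * real (r b)"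
      using w0 by (rule mult_left_mono)
    with wr show ?thesis by linarith
  qed
  have "Phi E endB cB B r (C \<inter> F) \<le> (\<Sum>b\<in>B. P / (\<gamma> * \<tau>) * ell F endB cB b)"
    unfolding Phi_def w_def[symmetric] by (rule sum_mono) (rule key)
  also have "\<dots> = P / (\<gamma> * \<tau>) * ell_set F endB cB B"
    by (simp add: ell_set_def sum_distrib_left)
  also have "\<dots> \<le> P / (\<gamma> * \<tau>) * \<tau>"
    using assms(11) P gt by (intro mult_left_mono) auto
  also have "\<dots> = P / \<gamma>" using assms(8) by simp
  finally show ?thesis unfolding P_def C_def .
qed

end
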